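(* Fix $s,\mu>0$ and let $f_{s,\mu}$ be the repressilator vector field $\dot x=\frac{\mu}{1+y^s}-x$, $\dot y=\frac{\mu}{1+z^s}-y$, $\dot z=\frac{\mu}{1+x^s}-z$ on the closed positive orthant $\mathbb{R}^3_+=\{x,y,z\ge0\}$. Then $d\theta(f_{s,\mu})>0$ on $\mathbb{R}^3_+\setminus\Delta$.
   Context: $\Delta:=\mathrm{span}\{(1,1,1)\}\subset\mathbb{R}^3$ is the diagonal. For $\mathbf{x}=(x,y,z)$, $\mathbf{x}_\perp$ denotes the orthogonal projection of $\mathbf{x}$ onto $\Delta^\perp$, so $\|\mathbf{x}_\perp\|^2=\tfrac23(x^2+y^2+z^2-xy-yz-zx)$. The closed 1-form $d\theta$ on $\mathbb{R}^3\setminus\Delta$ is $$d\theta:=\frac{1}{\sqrt3}\,\frac{(z-y)\,dx+(x-z)\,dy+(y-x)\,dz}{\|\mathbf{x}_\perp\|^2}.$$ *)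

theory Defs
  imports "HOL-Analysis.Analysis"
begin

definition diag :: "(real \<times> real \<times> real) set" where
  "diag = {(t, t, t) | t. True}"

definition pos_orthant :: "(real \<times> real \<times> real) set" where
  "pos_orthant = {(x, y, z). x \<ge> 0 \<and> y \<ge> 0 \<and> z \<ge> 0}"

definition perp_norm2 :: "real \<times> real \<times> real \<Rightarrow> real" where
  "perp_norm2 p = (case p of (x, y, z) \<Rightarrow>
     norm ((x, y, z) - ((x + y + z) / 3) *\<^sub>R (1, 1, 1)) ^ 2)"

definition dtheta :: "real \<times> real \<times> real \<Rightarrow> real \<times> real \<times> real \<Rightarrow> real" where
  "dtheta p v = (case p of (x, y, z) \<Rightarrow> case v of (u, v, w) \<Rightarrow>
     (1 / sqrt 3) * ((z - y) * u + (x - z) * v + (y - x) * w) / perp_norm2 (x, y, z))"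

definition repressilator :: "real \<Rightarrow> real \<Rightarrow> real \<times> real \<times> real \<Rightarrow> real \<times> real \<times> real" where
  "repressilator s \<mu> p = (case p of (x, y, z) \<Rightarrow>
     (\<mu> / (1 + y powr s) - x, \<mu> / (1 + z powr s) - y, \<mu> / (1 + x powr s) - z))"

end

theory Submission
  imports Defs
begin

lemma key:
  fixes x y z :: real and g :: "real \<Rightarrow> real"
  assumes m: "\<And>u v. u \<in> {x,y,z} \<Longrightarrow> v \<in> {x,y,z} \<Longrightarrow> u < v \<Longrightarrow> g v < g u"
    and ne: "\<not> (x = y \<and> y = z)"
  shows "(z - y) * g y + (x - z) * g z + (y - x) * g x > 0"
proof -
  have P: "0 \<le> (a - b) * (g c - g d)" if "a \<ge> b" "c \<in> {x,y,z}" "d \<in> {x,y,z}" "c \<le> d" for a b c d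
  proof -
    have "g d \<le> g c" using m[OF that(2,3)] that(4) by (cases "c = d") auto
    then show ?thesis using that(1) by simp
  qed
  have S: "0 < (a - b) * (g c - g d)" if "a > b" "c \<in> {x,y,z}" "d \<in> {x,y,z}" "c < d" for a b c d
  proof -
    have "g d < g c" using m[OF that(2,3,4)] .
    then show ?thesis using that(1) by simp
  qed
  let ?N = "(z - y) * g y + (x - z) * g z + (y - x) * g x"
  consider "x \<ge> y \<and> y \<ge> z" | "y \<ge> z \<and> z \<ge> x" | "z \<ge> x \<and> x \<ge> y"
    | "x \<le> y \<and> y \<le> z" | "y \<le> z \<and> z \<le> x" | "z \<le> x \<and> x \<le> y" by linarith
  then show ?thesis
  proof cases
    case 1
    have "?N = (x - y) * (g z - g x) + (y - z) * (g z - g y)" by algebra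
    moreover have "x > z" using 1 ne by auto
    ultimately show ?thesis using 1 P[of y x z x] P[of z y z y] S[of y x z x] S[of z y z y]
      by (cases "x > y") auto
  next
    case 2
    have "?N = (y - z) * (g x - g y) + (z - x) * (g x - g z)" by algebra
    moreover have "y > x" using 2 ne by auto
    ultimately show ?thesis using 2 P[of z y x y] P[of x z x z] S[of z y x y] S[of x z x z]
      by (cases "y > z") auto
  next
    case 3
    have "?N = (z - x) * (g y - g z) + (x - y) * (g y - g x)" by algebra
    moreover have "z > y" using 3 ne by auto
    ultimately show ?thesis using 3 P[of x z y z] P[of y x y x] S[of x z y z] S[of y x y x]
      by (cases "z > x") auto
  next
    case 4
    have "?N = (z - y) * (g y - g z) + (y - x) * (g x - g z)" by algebra
    moreover have "z > x" using 4 ne by auto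
    ultimately show ?thesis using 4 P[of y z y z] P[of x y x z] S[of y z y z] S[of x y x z]
      by (cases "z > y") auto
  next
    case 5
    have "?N = (x - z) * (g z - g x) + (z - y) * (g y - g x)" by algebra
    moreover have "x > y" using 5 ne by auto
    ultimately show ?thesis using 5 P[of z x z x] P[of y z y x] S[of z x z x] S[of y z y x]
      by (cases "x > z") auto
  next
    case 6
    have "?N = (y - x) * (g x - g y) + (x - z) * (g z - g y)" by algebra
    moreover have "y > z" using 6 ne by auto
    ultimately show ?thesis using 6 P[of x y x y] P[of z x z y] S[of x y x y] S[of z x z y]
      by (cases "y > x") auto
  qed
qed


lemma perp_pos:
  assumes "\<not> (x = y \<and> y = z)"
  shows "perp_norm2 (x, y, z) > 0"
proof -
  have "(x, y, z) - ((x + y + z) / 3) *\<^sub>R (1::real, 1::real, 1::real) \<noteq> 0"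
    using assms by (auto simp: zero_prod_def)
  then show ?thesis unfolding perp_norm2_def by simp
qed

theorem lemma7:
  fixes s \<mu> :: real
  assumes "s > 0" and "\<mu> > 0"
  shows "\<forall>p \<in> pos_orthant - diag. dtheta p (repressilator s \<mu> p) > 0"
proof
  fix p assume p: "p \<in> pos_orthant - diag"
  obtain x y z where pe: "p = (x, y, z)" by (cases p) auto
  have nn: "x \<ge> 0" "y \<ge> 0" "z \<ge> 0" using p pe by (auto simp: pos_orthant_def)
  have ne: "\<not> (x = y \<and> y = z)" using p pe by (auto simp: diag_def)
  define g where "g t = \<mu> / (1 + t powr s)" for t
  have m: "g v < g u" if "u \<in> {x,y,z}" "v \<in> {x,y,z}" "u < v" for u v
  proof -
    have u0: "u \<ge> 0" using that nn by auto
    have "u powr s < v powr s" using powr_less_mono2[OF assms(1) u0 that(3)] .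
    moreover have "u powr s \<ge> 0" "v powr s \<ge> 0" by simp_all
    moreover have "0 < (1 + v powr s) * (1 + u powr s)"
      by (intro mult_pos_pos) (simp_all add: add_pos_nonneg)
    ultimately show ?thesis unfolding g_def using assms(2)
      by (intro divide_strict_left_mono) auto
  qed
  have N: "(z - y) * g y + (x - z) * g z + (y - x) * g x > 0" by (rule key[OF m ne])
  have num: "(z - y) * (\<mu> / (1 + y powr s) - x) + (x - z) * (\<mu> / (1 + z powr s) - y)
      + (y - x) * (\<mu> / (1 + x powr s) - z) = (z - y) * g y + (x - z) * g z + (y - x) * g x"
    unfolding g_def by algebra
  have "dtheta p (repressilator s \<mu> p) = (1 / sqrt 3) * ((z - y) * g y + (x - z) * g z + (y - x) * g x) / perp_norm2 (x, y, z)"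
    unfolding pe dtheta_def repressilator_def using num by simp
  also have "\<dots> > 0" using N perp_pos[OF ne] by simp
  finally show "dtheta p (repressilator s \<mu> p) > 0" .
qed

end
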